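(* For any simple undirected graph $G$, $$n_G(\mathcal{L}_5)=\sum_{\{st,uv\}\in Q}\Big(\sum_{w\in\Gamma(s)\setminus\{s,t,u,v\}}(a_{uw}+a_{vw})+\sum_{w\in\Gamma(t)\setminus\{s,t,u,v\}}(a_{uw}+a_{vw})\Big).$$
   Context: $a_{ij}$ are the adjacency matrix entries, $\Gamma(x)$ is the neighbourhood of $x$. $Q$ is the set of unordered pairs $\{st,uv\}$ of edges with $s,t,u,v$ pairwise distinct. $n_G(F)$ is the number of (not necessarily induced) subgraphs isomorphic to $F$; $\mathcal{L}_5$ is the path on 5 vertices. *)

theory Defs
  imports Main
begin

definition simple_graph :: "'a set \<Rightarrow> 'a set set \<Rightarrow> bool" where
  "simple_graph V E \<longleftrightarrow> finite V \<and>
     (\<forall>e\<in>E. \<exists>x y. x \<noteq> y \<and> x \<in> V \<and> y \<in> V \<and> e = {x, y})"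

definition adj :: "'a set set \<Rightarrow> 'a \<Rightarrow> 'a \<Rightarrow> nat" where
  "adj E x y = (if {x, y} \<in> E then 1 else 0)"

definition nbhd :: "'a set \<Rightarrow> 'a set set \<Rightarrow> 'a \<Rightarrow> 'a set" where
  "nbhd V E x = {y \<in> V. {x, y} \<in> E}"

definition subgraph :: "'a set \<Rightarrow> 'a set set \<Rightarrow> 'a set \<Rightarrow> 'a set set \<Rightarrow> bool" where
  "subgraph W F V E \<longleftrightarrow> W \<subseteq> V \<and> F \<subseteq> E \<and> (\<forall>e\<in>F. e \<subseteq> W)"

definition graph_iso :: "'a set \<Rightarrow> 'a set set \<Rightarrow> 'b set \<Rightarrow> 'b set set \<Rightarrow> bool" where
  "graph_iso V1 E1 V2 E2 \<longleftrightarrow> (\<exists>f. bij_betw f V1 V2 \<and>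
     (\<forall>x\<in>V1. \<forall>y\<in>V1. {x, y} \<in> E1 \<longleftrightarrow> {f x, f y} \<in> E2))"

definition subgraph_count :: "'b set \<Rightarrow> 'b set set \<Rightarrow> 'a set \<Rightarrow> 'a set set \<Rightarrow> nat" where
  "subgraph_count VH EH V E =
     card {(W, F). subgraph W F V E \<and> graph_iso VH EH W F}"

definition L5_V :: "nat set" where "L5_V = {0..<5}"
definition L5_E :: "nat set set" where "L5_E = {{i, Suc i} | i. i < 4}"

definition Qset :: "'a set set \<Rightarrow> 'a set set set" where
  "Qset E = {{{s, t}, {u, v}} | s t u v.
      {s, t} \<in> E \<and> {u, v} \<in> E \<and> distinct [s, t, u, v]}"

text \<open>The summand for a pair {st,uv}; the expression is symmetric under relabelling
  s<->t, u<->v and swapping the two edges, so any labelling may be chosen.\<close>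
definition Qterm :: "'a set \<Rightarrow> 'a set set \<Rightarrow> 'a \<Rightarrow> 'a \<Rightarrow> 'a \<Rightarrow> 'a \<Rightarrow> nat" where
  "Qterm V E s t u v =
     (\<Sum>w\<in>nbhd V E s - {s, t, u, v}. adj E u w + adj E v w) +
     (\<Sum>w\<in>nbhd V E t - {s, t, u, v}. adj E u w + adj E v w)"

definition Qsum :: "'a set \<Rightarrow> 'a set set \<Rightarrow> nat" where
  "Qsum V E = (\<Sum>p\<in>Qset E.
     (case (SOME (s, t, u, v). p = {{s, t}, {u, v}} \<and> distinct [s, t, u, v]) of
        (s, t, u, v) \<Rightarrow> Qterm V E s t u v))"

end

theory Submission
  imports Defs
begin

definition Dset :: "'a set set \<Rightarrow> ('a \<times> 'a \<times> 'a \<times> 'a) set" where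
  "Dset E = {(a,b,d,e). {a,b} \<in> E \<and> {d,e} \<in> E \<and> distinct [a,b,d,e]}"

definition Cset :: "'a set \<Rightarrow> 'a set set \<Rightarrow> 'a \<times> 'a \<times> 'a \<times> 'a \<Rightarrow> 'a set" where
  "Cset V E x = (case x of (a,b,d,e) \<Rightarrow> {c \<in> V - {a,b,d,e}. {b,c} \<in> E \<and> {c,d} \<in> E})"

definition keyf :: "'a \<times> 'a \<times> 'a \<times> 'a \<Rightarrow> 'a set set" where
  "keyf x = (case x of (a,b,d,e) \<Rightarrow> {{a,b},{d,e}})"

lemma adj_sym: "adj E x y = adj E y x"
  by (simp add: adj_def insert_commute)

lemma edge_in_V:
  assumes "simple_graph V E" "{a,b} \<in> E"
  shows "a \<in> V" "b \<in> V"
  using assms unfolding simple_graph_def by (auto simp: doubleton_eq_iff)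

lemma Dset_finite:
  assumes "simple_graph V E"
  shows "finite (Dset E)"
proof -
  have "Dset E \<subseteq> V \<times> V \<times> V \<times> V"
    using edge_in_V[OF assms] unfolding Dset_def by auto
  moreover have "finite V" using assms simple_graph_def by auto
  ultimately show ?thesis by (meson finite_SigmaI finite_subset)
qed

lemma card_Cset:
  assumes "finite V"
  shows "card (Cset V E (a,b,d,e)) = (\<Sum>c\<in>V - {a,b,d,e}. adj E b c * adj E c d)"
proof -
  have "card (Cset V E (a,b,d,e)) = (\<Sum>c\<in>{c \<in> V - {a,b,d,e}. {b,c} \<in> E \<and> {c,d} \<in> E}. 1)"
    by (simp add: Cset_def)
  also have "\<dots> = (\<Sum>c\<in>V - {a,b,d,e}. if {b,c} \<in> E \<and> {c,d} \<in> E then 1 else 0)"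
    using assms by (subst sum.inter_filter) auto
  also have "\<dots> = (\<Sum>c\<in>V - {a,b,d,e}. adj E b c * adj E c d)"
    by (rule sum.cong) (auto simp: adj_def)
  finally show ?thesis .
qed

lemma Qterm_alt:
  assumes "simple_graph V E"
  shows "Qterm V E s t u v = (\<Sum>c\<in>V - {s,t,u,v}. (adj E s c + adj E t c) * (adj E u c + adj E v c))"
proof -
  have fin: "finite V" using assms simple_graph_def by auto
  have nb: "nbhd V E x - {s,t,u,v} = {c \<in> V - {s,t,u,v}. {x,c} \<in> E}" for x
    unfolding nbhd_def by auto
  have 1: "(\<Sum>w\<in>nbhd V E x - {s,t,u,v}. adj E u w + adj E v w)
      = (\<Sum>c\<in>V - {s,t,u,v}. adj E x c * (adj E u c + adj E v c))" for x
    unfolding nb using fin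
    apply (subst sum.inter_filter)
     apply simp
    apply (rule sum.cong)
     apply (auto simp: adj_def[of E x])
    done
  show ?thesis unfolding Qterm_def 1 sum.distrib[symmetric]
    by (rule sum.cong) (auto simp: algebra_simps)
qed

lemma fiber:
  assumes "{s,t} \<in> E" "{u,v} \<in> E" "distinct [s,t,u,v]"
  shows "{x \<in> Dset E. keyf x = {{s,t},{u,v}}} =
    {(s,t,u,v),(t,s,u,v),(s,t,v,u),(t,s,v,u),(u,v,s,t),(v,u,s,t),(u,v,t,s),(v,u,t,s)}"
proof (rule set_eqI, clarify)
  fix a b d e
  have "keyf (a,b,d,e) = {{s,t},{u,v}} \<longleftrightarrow>
     ({a,b} = {s,t} \<and> {d,e} = {u,v}) \<or> ({a,b} = {u,v} \<and> {d,e} = {s,t})"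
    unfolding keyf_def by (simp add: doubleton_eq_iff)
  also have "\<dots> \<longleftrightarrow> ((a = s \<and> b = t) \<or> (a = t \<and> b = s)) \<and> ((d = u \<and> e = v) \<or> (d = v \<and> e = u))
     \<or> ((a = u \<and> b = v) \<or> (a = v \<and> b = u)) \<and> ((d = s \<and> e = t) \<or> (d = t \<and> e = s))"
    by (simp add: doubleton_eq_iff)
  finally have k: "keyf (a,b,d,e) = {{s,t},{u,v}} \<longleftrightarrow> \<dots>" .
  show "((a,b,d,e) \<in> {x \<in> Dset E. keyf x = {{s,t},{u,v}}}) =
    ((a,b,d,e) \<in> {(s,t,u,v),(t,s,u,v),(s,t,v,u),(t,s,v,u),(u,v,s,t),(v,u,s,t),(u,v,t,s),(v,u,t,s)})"
    unfolding mem_Collect_eq k using assms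
    by (auto simp: Dset_def insert_commute)
qed

lemma fiber_sum:
  assumes G: "simple_graph V E" and "{s,t} \<in> E" "{u,v} \<in> E" "distinct [s,t,u,v]"
  shows "(\<Sum>x\<in>{x \<in> Dset E. keyf x = {{s,t},{u,v}}}. card (Cset V E x)) = 2 * Qterm V E s t u v"
proof -
  have fin: "finite V" using G simple_graph_def by auto
  have X: "{t,s,u,v} = {s,t,u,v}" "{s,t,v,u} = {s,t,u,v}" "{t,s,v,u} = {s,t,u,v}"
    "{u,v,s,t} = {s,t,u,v}" "{v,u,s,t} = {s,t,u,v}" "{u,v,t,s} = {s,t,u,v}" "{v,u,t,s} = {s,t,u,v}"
    by auto
  show ?thesis
    unfolding fiber[OF assms(2-4)] Qterm_alt[OF G]
    using assms(4)
    apply (simp add: card_Cset[OF fin] X)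
    apply (simp add: sum.distrib[symmetric] sum_distrib_left)
    apply (rule sum.cong, simp)
    apply (simp add: adj_sym[of E _ s] adj_sym[of E _ t] adj_sym[of E _ u] adj_sym[of E _ v] algebra_simps)
    done
qed

lemma Qsum_eq:
  assumes G: "simple_graph V E"
  shows "2 * Qsum V E = (\<Sum>x\<in>Dset E. card (Cset V E x))"
proof -
  have img: "keyf ` Dset E = Qset E"
  proof
    show "keyf ` Dset E \<subseteq> Qset E"
      unfolding keyf_def Dset_def Qset_def by (auto split: prod.splits) blast
    show "Qset E \<subseteq> keyf ` Dset E"
    proof
      fix p assume "p \<in> Qset E"
      then obtain s t u v where "p = {{s, t}, {u, v}}" "{s, t} \<in> E" "{u, v} \<in> E" "distinct [s, t, u, v]"
        unfolding Qset_def by blast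
      then show "p \<in> keyf ` Dset E"
        unfolding keyf_def Dset_def by (intro image_eqI[of _ _ "(s,t,u,v)"]) auto
    qed
  qed
  have "(\<Sum>x\<in>Dset E. card (Cset V E x)) =
     (\<Sum>p\<in>Qset E. \<Sum>x\<in>{x \<in> Dset E. keyf x = p}. card (Cset V E x))"
    using sum.image_gen[OF Dset_finite[OF G], of "\<lambda>x. card (Cset V E x)" keyf] img by simp
  also have "\<dots> = (\<Sum>p\<in>Qset E. 2 * (case (SOME (s, t, u, v). p = {{s, t}, {u, v}} \<and> distinct [s, t, u, v]) of
        (s, t, u, v) \<Rightarrow> Qterm V E s t u v))"
  proof (rule sum.cong)
    fix p assume p: "p \<in> Qset E"
    then have ex: "\<exists>x. (case x of (s, t, u, v) \<Rightarrow> p = {{s, t}, {u, v}} \<and> distinct [s, t, u, v])"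
      and pE: "p \<subseteq> E"
      unfolding Qset_def by auto
    obtain s t u v where st: "(SOME (s, t, u, v). p = {{s, t}, {u, v}} \<and> distinct [s, t, u, v]) = (s,t,u,v)"
      by (cases "(SOME (s, t, u, v). p = {{s, t}, {u, v}} \<and> distinct [s, t, u, v])") auto
    have "case (s,t,u,v) of (s, t, u, v) \<Rightarrow> p = {{s, t}, {u, v}} \<and> distinct [s, t, u, v]"
      using someI_ex[OF ex] unfolding st .
    then have pp: "p = {{s, t}, {u, v}}" "distinct [s, t, u, v]" by auto
    with pE have "{s,t} \<in> E" "{u,v} \<in> E" by auto
    then show "(\<Sum>x\<in>{x \<in> Dset E. keyf x = p}. card (Cset V E x)) = 2 * (case (SOME (s, t, u, v). p = {{s, t}, {u, v}} \<and> distinct [s, t, u, v]) of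
        (s, t, u, v) \<Rightarrow> Qterm V E s t u v)"
      unfolding st using fiber_sum[OF G _ _ pp(2)] pp(1) by simp
  qed simp
  finally show ?thesis unfolding Qsum_def by (simp add: sum_distrib_left)
qed


lemma L5_E_eq: "L5_E = {{0,1},{1,2},{2,3},{3,4}}"
proof -
  have "L5_E = (\<lambda>i. {i, Suc i}) ` {..<4}" unfolding L5_E_def by auto
  also have "{..<4::nat} = {0,1,2,3}" by auto
  finally show ?thesis by (simp add: numeral_eq_Suc)
qed

lemma L5_V_eq: "L5_V = {0,1,2,3,4}"
  unfolding L5_V_def by auto

definition nbF :: "'a set set \<Rightarrow> 'a \<Rightarrow> 'a set" where
  "nbF F x = {y. {x,y} \<in> F}"

lemma nbF_path:
  assumes "distinct [a,b,c,d,e]"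
  shows "nbF {{a,b},{b,c},{c,d},{d,e}} a = {b}"
    "nbF {{a,b},{b,c},{c,d},{d,e}} b = {a,c}"
    "nbF {{a,b},{b,c},{c,d},{d,e}} c = {b,d}"
    "nbF {{a,b},{b,c},{c,d},{d,e}} d = {c,e}"
    "nbF {{a,b},{b,c},{c,d},{d,e}} e = {d}"
  using assms unfolding nbF_def by (auto simp: doubleton_eq_iff)

lemma path_unique:
  assumes d1: "distinct [a,b,c,d,e]" and d2: "distinct [a',b',c',d',e']"
    and F: "{{a',b'},{b',c'},{c',d'},{d',e'}} = {{a,b},{b,c},{c,d},{d,e}}"
    and a': "a' \<in> {a,b,c,d,e}"
  shows "(a',b',c',d',e') = (a,b,c,d,e) \<or> (a',b',c',d',e') = (e,d,c,b,a)"
proof -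
  note N = nbF_path[OF d1, folded F]
  note N' = nbF_path[OF d2]
  have "a' = a \<or> a' = e"
    using a' N N' d1 by (auto simp: doubleton_eq_iff)
  then show ?thesis
  proof
    assume "a' = a"
    then have "b' = b" using N(1) N'(1) by auto
    then have "c' = c" using N(2) N'(2) d1 d2 \<open>a' = a\<close> by (auto simp: doubleton_eq_iff)
    then have "d' = d" using N(3) N'(3) d1 d2 \<open>b' = b\<close> by (auto simp: doubleton_eq_iff)
    then have "e' = e" using N(4) N'(4) d1 d2 \<open>c' = c\<close> by (auto simp: doubleton_eq_iff)
    then show ?thesis using \<open>a' = a\<close> \<open>b' = b\<close> \<open>c' = c\<close> \<open>d' = d\<close> by simp
  next
    assume "a' = e"
    then have "b' = d" using N(5) N'(1) by auto
    then have "c' = c" using N(4) N'(2) d1 d2 \<open>a' = e\<close> by (auto simp: doubleton_eq_iff)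
    then have "d' = b" using N(3) N'(3) d1 d2 \<open>b' = d\<close> by (auto simp: doubleton_eq_iff)
    then have "e' = a" using N(2) N'(4) d1 d2 \<open>c' = c\<close> by (auto simp: doubleton_eq_iff)
    then show ?thesis using \<open>a' = e\<close> \<open>b' = d\<close> \<open>c' = c\<close> \<open>d' = b\<close> by simp
  qed
qed

lemma iso_path:
  assumes "distinct [a,b,c,d,e]"
  shows "graph_iso L5_V L5_E {a,b,c,d,e} {{a,b},{b,c},{c,d},{d,e}}"
  unfolding graph_iso_def
proof (intro exI[of _ "(!) [a,b,c,d,e]"] conjI)
  show "bij_betw ((!) [a, b, c, d, e]) L5_V {a, b, c, d, e}"
    by (rule bij_betw_nth) (use assms in \<open>auto simp: L5_V_def\<close>)
  show "\<forall>x\<in>L5_V. \<forall>y\<in>L5_V. ({x, y} \<in> L5_E) = ({[a, b, c, d, e] ! x, [a, b, c, d, e] ! y} \<in> {{a, b}, {b, c}, {c, d}, {d, e}})"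
    unfolding L5_V_eq L5_E_eq using assms by (simp add: doubleton_eq_iff) blast
qed

definition phi :: "('a \<times> 'a \<times> 'a \<times> 'a) \<times> 'a \<Rightarrow> 'a set \<times> 'a set set" where
  "phi x = (case x of ((a,b,d,e),c) \<Rightarrow> ({a,b,c,d,e}, {{a,b},{b,c},{c,d},{d,e}}))"

lemma Pmem:
  assumes "((a,b,d,e),c) \<in> Sigma (Dset E) (Cset V E)"
  shows "distinct [a,b,c,d,e]" "{a,b} \<in> E" "{b,c} \<in> E" "{c,d} \<in> E" "{d,e} \<in> E" "c \<in> V"
  using assms unfolding Dset_def Cset_def by auto

lemma phi_in_S:
  assumes G: "simple_graph V E" and x: "x \<in> Sigma (Dset E) (Cset V E)"
  shows "phi x \<in> {(W, F). subgraph W F V E \<and> graph_iso L5_V L5_E W F}"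
proof -
  obtain a b d e c where xe: "x = ((a,b,d,e),c)" by (metis prod.exhaust)
  note M = Pmem[OF x[unfolded xe]]
  have "a \<in> V" "b \<in> V" "d \<in> V" "e \<in> V" using edge_in_V[OF G M(2)] edge_in_V[OF G M(5)] by auto
  then show ?thesis unfolding xe phi_def using M iso_path[OF M(1)]
    by (auto simp: subgraph_def)
qed

lemma S_in_img:
  assumes G: "simple_graph V E" and y: "y \<in> {(W, F). subgraph W F V E \<and> graph_iso L5_V L5_E W F}"
  shows "y \<in> phi ` Sigma (Dset E) (Cset V E)"
proof -
  obtain W F where yW: "y = (W,F)" by (metis prod.exhaust)
  have sg: "subgraph W F V E" and iso: "graph_iso L5_V L5_E W F" using y yW by auto
  obtain f where bij: "bij_betw f L5_V W"
    and ed: "\<forall>x\<in>L5_V. \<forall>y\<in>L5_V. {x, y} \<in> L5_E \<longleftrightarrow> {f x, f y} \<in> F"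
    using iso unfolding graph_iso_def by blast
  have W: "W = {f 0, f 1, f 2, f 3, f 4}" using bij unfolding bij_betw_def L5_V_eq by auto
  have "inj_on f {0,1,2,3,4}" using bij unfolding bij_betw_def L5_V_eq by auto
  then have dist: "distinct [f 0, f 1, f 2, f 3, f 4]" by (auto simp: inj_on_def)
  have ed2: "\<forall>x\<in>{0,1,2,3,4}. \<forall>y\<in>{0,1,2,3,4::nat}. {x, y} \<in> {{0,1},{1,2},{2,3},{3,4}} \<longleftrightarrow> {f x, f y} \<in> F"
    using ed unfolding L5_V_eq L5_E_eq .
  then have ed3: "{f 0, f 1} \<in> F" "{f 1, f 2} \<in> F" "{f 2, f 3} \<in> F" "{f 3, f 4} \<in> F"
    "{f 0, f 2} \<notin> F" "{f 0, f 3} \<notin> F" "{f 0, f 4} \<notin> F" "{f 1, f 3} \<notin> F"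
    "{f 1, f 4} \<notin> F" "{f 2, f 4} \<notin> F"
    by (simp_all add: doubleton_eq_iff)
  have FE: "F \<subseteq> E" and FW: "\<forall>e\<in>F. e \<subseteq> W" and WV: "W \<subseteq> V" using sg unfolding subgraph_def by auto
  have "F \<subseteq> {{f 0, f 1}, {f 1, f 2}, {f 2, f 3}, {f 3, f 4}}"
  proof
    fix e assume eF: "e \<in> F"
    then obtain p q where pq: "p \<noteq> q" "e = {p,q}" using FE G unfolding simple_graph_def by blast
    have "p \<in> W" "q \<in> W" using FW eF pq by auto
    then show "e \<in> {{f 0, f 1}, {f 1, f 2}, {f 2, f 3}, {f 3, f 4}}"
      using ed3 eF pq unfolding W by (auto simp: insert_commute)
  qed
  then have Feq: "F = {{f 0, f 1}, {f 1, f 2}, {f 2, f 3}, {f 3, f 4}}" using ed3 by auto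
  have "((f 0, f 1, f 3, f 4), f 2) \<in> Sigma (Dset E) (Cset V E)"
    using dist ed3 FE WV W unfolding Dset_def Cset_def by auto
  moreover have "phi ((f 0, f 1, f 3, f 4), f 2) = y" unfolding phi_def yW W Feq by simp
  ultimately show ?thesis by force
qed

lemma fiber2:
  assumes x: "x \<in> Sigma (Dset E) (Cset V E)"
  shows "card {x' \<in> Sigma (Dset E) (Cset V E). phi x' = phi x} = 2"
proof -
  obtain a b d e c where xe: "x = ((a,b,d,e),c)" by (metis prod.exhaust)
  note M = Pmem[OF x[unfolded xe]]
  have "{x' \<in> Sigma (Dset E) (Cset V E). phi x' = phi x} = {((a,b,d,e),c), ((e,d,b,a),c)}"
  proof (rule set_eqI, clarify)
    fix a' b' d' e' c'
    show "(((a',b',d',e'),c') \<in> {x' \<in> Sigma (Dset E) (Cset V E). phi x' = phi x}) =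
          (((a',b',d',e'),c') \<in> {((a,b,d,e),c), ((e,d,b,a),c)})"
    proof
      assume "((a',b',d',e'),c') \<in> {x' \<in> Sigma (Dset E) (Cset V E). phi x' = phi x}"
      then have P': "((a',b',d',e'),c') \<in> Sigma (Dset E) (Cset V E)"
        and eq: "{a',b',c',d',e'} = {a,b,c,d,e}" "{{a',b'},{b',c'},{c',d'},{d',e'}} = {{a,b},{b,c},{c,d},{d,e}}"
        unfolding xe phi_def by auto
      have "a' \<in> {a,b,c,d,e}" using eq(1) by blast
      from path_unique[OF M(1) Pmem(1)[OF P'] eq(2) this]
      show "((a',b',d',e'),c') \<in> {((a,b,d,e),c), ((e,d,b,a),c)}" by auto
    next
      assume "((a',b',d',e'),c') \<in> {((a,b,d,e),c), ((e,d,b,a),c)}"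
      then show "((a',b',d',e'),c') \<in> {x' \<in> Sigma (Dset E) (Cset V E). phi x' = phi x}"
        using x M unfolding xe phi_def Dset_def Cset_def
        by (auto simp: insert_commute)
    qed
  qed
  then show ?thesis using M(1) by simp
qed

lemma finP_lem:
  assumes "simple_graph V E"
  shows "finite (Sigma (Dset E) (Cset V E))"
proof -
  have fin: "finite V" using assms simple_graph_def by auto
  have finC: "\<forall>x\<in>Dset E. finite (Cset V E x)"
    using fin unfolding Cset_def by (auto split: prod.splits)
  show ?thesis
    apply (rule finite_SigmaI[OF Dset_finite[OF assms]]) using finC by blast
qed

lemma img_eq:
  assumes "simple_graph V E"
  shows "phi ` Sigma (Dset E) (Cset V E) = {(W, F). subgraph W F V E \<and> graph_iso L5_V L5_E W F}"
proof (rule equalityI)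
  show "phi ` Sigma (Dset E) (Cset V E) \<subseteq> {(W, F). subgraph W F V E \<and> graph_iso L5_V L5_E W F}"
    by (rule image_subsetI) (rule phi_in_S[OF assms])
  show "{(W, F). subgraph W F V E \<and> graph_iso L5_V L5_E W F} \<subseteq> phi ` Sigma (Dset E) (Cset V E)"
    by (rule subsetI) (rule S_in_img[OF assms])
qed

lemma fiber_sum2:
  assumes "y \<in> phi ` Sigma (Dset E) (Cset V E)"
  shows "(\<Sum>x\<in>{x \<in> Sigma (Dset E) (Cset V E). phi x = y}. 1) = (2::nat)"
proof -
  obtain x where x: "x \<in> Sigma (Dset E) (Cset V E)" and y: "y = phi x" using assms by blast
  show ?thesis unfolding y card_eq_sum[symmetric] by (rule fiber2[OF x])
qed

lemma cardP_S:
  assumes "simple_graph V E"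
  shows "card (Sigma (Dset E) (Cset V E)) = 2 * card {(W, F). subgraph W F V E \<and> graph_iso L5_V L5_E W F}"
proof -
  have "card (Sigma (Dset E) (Cset V E)) = (\<Sum>x\<in>Sigma (Dset E) (Cset V E). 1)" by (rule card_eq_sum)
  also have "\<dots> = (\<Sum>y\<in>phi ` Sigma (Dset E) (Cset V E). \<Sum>x\<in>{x \<in> Sigma (Dset E) (Cset V E). phi x = y}. 1)"
    by (rule sum.image_gen[OF finP_lem[OF assms]])
  also have "\<dots> = (\<Sum>y\<in>phi ` Sigma (Dset E) (Cset V E). 2)"
    by (rule sum.cong[OF refl]) (rule fiber_sum2)
  also have "\<dots> = 2 * card {(W, F). subgraph W F V E \<and> graph_iso L5_V L5_E W F}"
    by (simp only: sum_constant img_eq[OF assms] of_nat_id mult.commute)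
  finally show ?thesis .
qed

lemma cardP_Q:
  assumes "simple_graph V E"
  shows "card (Sigma (Dset E) (Cset V E)) = 2 * Qsum V E"
proof -
  have fin: "finite V" using assms simple_graph_def by auto
  have finC: "\<forall>x\<in>Dset E. finite (Cset V E x)"
    using fin unfolding Cset_def by (auto split: prod.splits)
  have "card (Sigma (Dset E) (Cset V E)) = (\<Sum>x\<in>Dset E. card (Cset V E x))"
    by (rule card_SigmaI[OF Dset_finite[OF assms] finC])
  also have "\<dots> = 2 * Qsum V E" by (rule Qsum_eq[OF assms, symmetric])
  finally show ?thesis .
qed

theorem proposition2:
  fixes V :: "'a set" and E :: "'a set set"
  assumes "simple_graph V E"
  shows "subgraph_count L5_V L5_E V E = Qsum V E"
  using cardP_S[OF assms] cardP_Q[OF assms] unfolding subgraph_count_def by linarith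

end
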